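(* Let $\Omega\subset\mathbb{R}^N$ be a bounded open Lipschitz set, $s\in[0,1)$ and $f\in L^2_0(\Omega)$. Then there exists a unique $u\in\mathbb{X}^s(\Omega)$ which is a weak solution of $\mathcal{D}^s_\Omega u=f$ in $\Omega$, i.e. $\mathcal{E}_s(u,v)=\int_\Omega fv\,dx$ for all $v\in\mathbb{H}^s(\Omega)$.
   Context: A bounded open set $\Omega\subset\mathbb{R}^N$ is a Lipschitz set if each boundary point has a neighborhood in which $\partial\Omega$ is, after rotation, the graph of a Lipschitz function. $L^2_0(\Omega)=\{u\in L^2(\Omega):\int_\Omega u\,dx=0\}$. $\mathbb{H}^s(\Omega)=\{u\in L^2(\Omega):\int_\Omega\int_\Omega\frac{(u(x)-u(y))^2}{|x-y|^{N+2s}}dxdy<\infty\}$, $\mathcal{E}_s(u,v)=\frac12\int_\Omega\int_\Omega\frac{(u(x)-u(y))(v(x)-v(y))}{|x-y|^{N+2s}}dxdy$, and $\mathbb{X}^s(\Omega)=\{u\in\mathbb{H}^s(\Omega):\int_\Omega u\,dx=0\}$. Here $\mathcal{D}^s_\Omega u(x)=\lim_{\varepsilon\to0^+}\int_{\Omega\setminus B_\varepsilon(x)}\frac{u(x)-u(y)}{|x-y|^{N+2s}}dy$. *)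

theory Defs
  imports "HOL-Analysis.Analysis"
begin

text \<open>Lipschitz open set: near every boundary point, after an orthogonal change of
coordinates R, the set is the region below the graph of a Lipschitz function g of the
first N-1 coordinates (the coordinate b plays the role of the N-th one).\<close>
definition lipschitz_set :: "'a::euclidean_space set \<Rightarrow> bool" where
  "lipschitz_set \<Omega> \<longleftrightarrow> open \<Omega> \<and>
     (\<forall>p\<in>frontier \<Omega>. \<exists>r>0. \<exists>(R::'a\<Rightarrow>'a) (b::'a) (g::'a\<Rightarrow>real) (C::real).
        orthogonal_transformation R \<and> b \<in> Basis \<and>
        C-lipschitz_on {y. y \<bullet> b = 0} g \<and>
        \<Omega> \<inter> ball p r =
          {x \<in> ball p r. R x \<bullet> b < g (R x - (R x \<bullet> b) *\<^sub>R b)})"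

definition L2 :: "'a::euclidean_space set \<Rightarrow> ('a \<Rightarrow> real) set" where
  "L2 \<Omega> = {u. u \<in> borel_measurable (lebesgue_on \<Omega>) \<and>
                 integrable (lebesgue_on \<Omega>) (\<lambda>x. (u x)\<^sup>2)}"

definition L2_0 :: "'a::euclidean_space set \<Rightarrow> ('a \<Rightarrow> real) set" where
  "L2_0 \<Omega> = {u \<in> L2 \<Omega>. integral\<^sup>L (lebesgue_on \<Omega>) u = 0}"

definition Hs :: "real \<Rightarrow> 'a::euclidean_space set \<Rightarrow> ('a \<Rightarrow> real) set" where
  "Hs s \<Omega> = {u \<in> L2 \<Omega>.
     (\<integral>\<^sup>+ z. ennreal ((u (fst z) - u (snd z))\<^sup>2 /
                   norm (fst z - snd z) powr (real DIM('a) + 2 * s))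
        \<partial>(lebesgue_on \<Omega> \<Otimes>\<^sub>M lebesgue_on \<Omega>)) < \<infinity>}"

definition Xs :: "real \<Rightarrow> 'a::euclidean_space set \<Rightarrow> ('a \<Rightarrow> real) set" where
  "Xs s \<Omega> = {u \<in> Hs s \<Omega>. integral\<^sup>L (lebesgue_on \<Omega>) u = 0}"

definition Es :: "real \<Rightarrow> 'a::euclidean_space set \<Rightarrow> ('a \<Rightarrow> real) \<Rightarrow> ('a \<Rightarrow> real) \<Rightarrow> real" where
  "Es s \<Omega> u v = 1/2 * (\<integral> z. (u (fst z) - u (snd z)) * (v (fst z) - v (snd z)) /
                   norm (fst z - snd z) powr (real DIM('a) + 2 * s)
        \<partial>(lebesgue_on \<Omega> \<Otimes>\<^sub>M lebesgue_on \<Omega>))"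

definition weak_solution :: "real \<Rightarrow> 'a::euclidean_space set \<Rightarrow> ('a \<Rightarrow> real) \<Rightarrow> ('a \<Rightarrow> real) \<Rightarrow> bool" where
  "weak_solution s \<Omega> f u \<longleftrightarrow>
     (\<forall>v\<in>Hs s \<Omega>. Es s \<Omega> u v = (\<integral> x. f x * v x \<partial>lebesgue_on \<Omega>))"

end

theory Submission
  imports Defs
begin


lemma quad_nonneg_cs:
  fixes a b c :: real
  assumes "c \<ge> 0" and q: "\<And>t. 0 \<le> a + 2*b*t + c*t^2"
  shows "b^2 \<le> a*c"
proof (cases "c = 0")
  case True
  show ?thesis
  proof (rule ccontr)
    assume "\<not> ?thesis"
    then have "b \<noteq> 0" using True by auto
    have "0 \<le> a + 2*b*(-(a+1)/(2*b)) + c*(-(a+1)/(2*b))^2" by (rule q)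
    also have "\<dots> = -1" using True \<open>b\<noteq>0\<close> by (simp add: field_simps)
    finally show False by simp
  qed
next
  case False
  then have c: "c > 0" using assms by simp
  have "0 \<le> a + 2*b*(-b/c) + c*(-b/c)^2" by (rule q)
  also have "\<dots> = (a*c - b^2)/c" using c by (simp add: field_simps power2_eq_square)
  finally show ?thesis using c by (simp add: divide_nonneg_pos zero_le_divide_iff)
qed

lemma quad_lower_zero:
  fixes g b :: real
  assumes "b \<ge> 0" and q: "\<And>t. 0 \<le> t*g + t^2*b/2"
  shows "g = 0"
proof (rule ccontr)
  assume g: "g \<noteq> 0"
  have "0 \<le> (-g/(b+1))*g + (-g/(b+1))^2*b/2" by (rule q)
  also have "\<dots> = g^2/(b+1) * (b/(2*(b+1)) - 1)"
  proof -
    have "b + 1 \<noteq> 0" using assms by simp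
    then show ?thesis by (simp add: divide_simps power2_eq_square) (simp add: algebra_simps)
  qed
  also have "\<dots> < 0"
  proof (rule mult_pos_neg)
    show "0 < g^2/(b+1)" using g assms by simp
    have "b/(2*(b+1)) < 1" using assms by (simp add: field_simps)
    then show "b/(2*(b+1)) - 1 < 0" by simp
  qed
  finally show False by simp
qed

lemma abstract_riesz:
  fixes V :: "('a \<Rightarrow> real) set" and B :: "('a\<Rightarrow>real) \<Rightarrow> ('a\<Rightarrow>real) \<Rightarrow> real"
    and l :: "('a\<Rightarrow>real) \<Rightarrow> real"
  assumes lin: "\<And>u v a b. u\<in>V \<Longrightarrow> v\<in>V \<Longrightarrow> (\<lambda>x. a * u x + b * v x) \<in> V"
  and Blin: "\<And>u v w a b. u\<in>V \<Longrightarrow> v\<in>V \<Longrightarrow> w\<in>V \<Longrightarrow> B (\<lambda>x. a * u x + b * v x) w = a * B u w + b * B v w"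
  and Bsym: "\<And>u v. u\<in>V \<Longrightarrow> v\<in>V \<Longrightarrow> B u v = B v u"
  and Bpos: "\<And>u. u\<in>V \<Longrightarrow> 0 \<le> B u u"
  and llin: "\<And>u v a b. u\<in>V \<Longrightarrow> v\<in>V \<Longrightarrow> l (\<lambda>x. a * u x + b * v x) = a * l u + b * l v"
  and lbd: "\<And>u. u\<in>V \<Longrightarrow> (l u)^2 \<le> C * B u u"
  and compl: "\<And>u. (\<And>n. u n \<in> V) \<Longrightarrow> (\<And>e. e>0 \<Longrightarrow> \<exists>N. \<forall>n\<ge>N. \<forall>m\<ge>N. B (\<lambda>x. u n x - u m x) (\<lambda>x. u n x - u m x) < e)
      \<Longrightarrow> \<exists>w\<in>V. (\<lambda>n. B (\<lambda>x. u n x - w x) (\<lambda>x. u n x - w x)) \<longlonglongrightarrow> 0"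
  and ne: "V \<noteq> {}"
  shows "\<exists>u\<in>V. \<forall>v\<in>V. B u v = l v"
proof -
  have diff: "(\<lambda>x. u x - v x) = (\<lambda>x. 1 * u x + (-1) * v x)" for u v :: "'a \<Rightarrow> real" by simp
  have Blin2: "B w (\<lambda>x. a * u x + b * v x) = a * B w u + b * B w v" if "u\<in>V" "v\<in>V" "w\<in>V" for u v w a b
    using that by (simp add: Bsym[of w] lin Blin)
  have Bexp: "B (\<lambda>x. a1 * u x + b1 * v x) (\<lambda>x. a2 * u x + b2 * v x)
      = a1*a2*B u u + (a1*b2 + b1*a2) * B u v + b1*b2*B v v" if "u\<in>V" "v\<in>V" for u v a1 b1 a2 b2
  proof -
    define W where "W = (\<lambda>x. a2 * u x + b2 * v x)"
    have WV: "W \<in> V" unfolding W_def using lin that by blast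
    have "B (\<lambda>x. a1 * u x + b1 * v x) W = a1 * B u W + b1 * B v W" using Blin[OF that WV] .
    also have "B u W = a2 * B u u + b2 * B u v" unfolding W_def by (rule Blin2) (use that in auto)
    also have "B v W = a2 * B v u + b2 * B v v" unfolding W_def by (rule Blin2) (use that in auto)
    finally show ?thesis unfolding W_def using Bsym[OF that] by (simp add: algebra_simps)
  qed
  have CS: "(B u v)^2 \<le> B u u * B v v" if "u\<in>V" "v\<in>V" for u v
  proof (rule quad_nonneg_cs)
    show "0 \<le> B v v" using that Bpos by simp
    fix t
    have "0 \<le> B (\<lambda>x. 1 * u x + t * v x) (\<lambda>x. 1 * u x + t * v x)" using Bpos lin that by blast
    also have "\<dots> = B u u + 2 * B u v * t + B v v * t^2"
      unfolding Bexp[OF that] by (simp add: power2_eq_square algebra_simps)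
    finally show "0 \<le> B u u + 2 * B u v * t + B v v * t^2" .
  qed
  define C' where "C' = \<bar>C\<bar> + 1"
  have C'pos: "C' > 0" unfolding C'_def by simp
  have lbd': "(l u)^2 \<le> C' * B u u" if "u \<in> V" for u
  proof -
    have "C * B u u \<le> C' * B u u" unfolding C'_def using Bpos[OF that]
      by (intro mult_right_mono) auto
    then show ?thesis using lbd[OF that] by linarith
  qed
  define J where "J u = B u u / 2 - l u" for u
  have labs: "\<bar>l u\<bar> \<le> B u u / 4 + C'" if "u \<in> V" for u
  proof (rule ccontr)
    assume "\<not> ?thesis"
    then have h: "B u u / 4 + C' < \<bar>l u\<bar>" by simp
    have "0 \<le> B u u / 4 + C'" using Bpos[OF that] C'pos by simp
    then have "(B u u / 4 + C')^2 < \<bar>l u\<bar>^2" using h by (intro power_strict_mono) auto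
    moreover have "(B u u / 4 + C')^2 \<ge> C' * B u u"
    proof -
      have "(B u u / 4 + C')^2 - C' * B u u = (B u u / 4 - C')^2" by (simp add: power2_eq_square algebra_simps)
      then show ?thesis by (smt (verit) zero_le_power2)
    qed
    ultimately show False using lbd'[OF that] by simp
  qed
  have Jlow: "J u \<ge> B u u / 4 - C'" if "u \<in> V" for u
    using labs[OF that] unfolding J_def by linarith
  have Jlow': "J u \<ge> - C'" if "u \<in> V" for u using Jlow[OF that] Bpos[OF that] by linarith
  define m where "m = Inf (J ` V)"
  have bdd: "bdd_below (J ` V)" using Jlow' by (auto intro!: bdd_belowI[of _ "-C'"])
  have mle: "m \<le> J u" if "u \<in> V" for u unfolding m_def using bdd that by (simp add: cInf_lower)
  have "\<exists>u\<in>V. J u < m + 1/(real n + 1)" for n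
  proof -
    have "Inf (J ` V) < m + 1/(real n + 1)" unfolding m_def by simp
    from cInf_lessD[OF _ this] ne show ?thesis by auto
  qed
  then obtain u where uV: "\<And>n. u n \<in> V" and uJ: "\<And>n. J (u n) < m + 1/(real n + 1)" by metis
  have mid: "B (\<lambda>x. u n x - u k x) (\<lambda>x. u n x - u k x) / 4 = J (u n) + J (u k) - 2 * J (\<lambda>x. (1/2) * u n x + (1/2) * u k x)" for n k
    unfolding J_def diff Bexp[OF uV uV] llin[OF uV uV]
    by (simp add: field_simps)
  have cauchy: "B (\<lambda>x. u n x - u k x) (\<lambda>x. u n x - u k x) \<le> 4 * (1/(real n + 1) + 1/(real k + 1))" for n k
  proof -
    have "m \<le> J (\<lambda>x. (1/2) * u n x + (1/2) * u k x)" using mle lin uV by blast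
    have X: "b \<le> 4*(e1+e2)" if "b/4 = ja + jk - 2*jm" "m \<le> jm" "ja < m + e1" "jk < m + e2"
      for b ja jk jm e1 e2 :: real using that by (simp add: field_simps)
    show ?thesis by (rule X[OF mid[of n k] \<open>m \<le> _\<close> uJ[of n] uJ[of k]])
  qed
  have "\<exists>w\<in>V. (\<lambda>n. B (\<lambda>x. u n x - w x) (\<lambda>x. u n x - w x)) \<longlonglongrightarrow> 0"
  proof (rule compl[OF uV])
    fix e :: real assume "e > 0"
    obtain N :: nat where N: "8 / e < real N" using reals_Archimedean2 by blast
    have Npos: "real N > 0" using N \<open>e>0\<close> by (smt (verit) divide_pos_pos)
    show "\<exists>N. \<forall>n\<ge>N. \<forall>k\<ge>N. B (\<lambda>x. u n x - u k x) (\<lambda>x. u n x - u k x) < e"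
    proof (intro exI allI impI)
      fix n k assume "N \<le> n" "N \<le> k"
      have "1/(real n + 1) < 1 / real N" using \<open>N \<le> n\<close> Npos by (simp add: frac_less2)
      moreover have "1/(real k + 1) < 1 / real N" using \<open>N \<le> k\<close> Npos by (simp add: frac_less2)
      moreover have "8 / real N < e" using N Npos \<open>e>0\<close> by (simp add: field_simps)
      ultimately show "B (\<lambda>x. u n x - u k x) (\<lambda>x. u n x - u k x) < e"
        using cauchy[of n k] by simp
    qed
  qed
  then obtain w where wV: "w \<in> V" and wlim: "(\<lambda>n. B (\<lambda>x. u n x - w x) (\<lambda>x. u n x - w x)) \<longlonglongrightarrow> 0" by blast
  have "\<forall>v\<in>V. B w v = l v"
  proof
    fix v assume vV: "v \<in> V"
    define g where "g n = B (u n) v - l v" for n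
    have dV: "(\<lambda>x. u n x - w x) \<in> V" for n unfolding diff using lin uV wV by blast
    have gdiff: "g n - (B w v - l v) = B (\<lambda>x. u n x - w x) v" for n
      unfolding g_def diff Blin[OF uV wV vV] by simp
    have "(\<lambda>n. (B (\<lambda>x. u n x - w x) v)^2) \<longlonglongrightarrow> 0"
    proof (rule tendsto_sandwich[of "\<lambda>_. 0" _ _ "\<lambda>n. B (\<lambda>x. u n x - w x) (\<lambda>x. u n x - w x) * B v v"])
      show "\<forall>\<^sub>F n in sequentially. 0 \<le> (B (\<lambda>x. u n x - w x) v)^2" by simp
      show "\<forall>\<^sub>F n in sequentially. (B (\<lambda>x. u n x - w x) v)^2 \<le> B (\<lambda>x. u n x - w x) (\<lambda>x. u n x - w x) * B v v"
        using CS dV vV by auto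
      show "(\<lambda>n. B (\<lambda>x. u n x - w x) (\<lambda>x. u n x - w x) * B v v) \<longlonglongrightarrow> 0"
        using tendsto_mult[OF wlim tendsto_const[of "B v v"]] by simp
    qed simp
    then have "(\<lambda>n. sqrt ((B (\<lambda>x. u n x - w x) v)^2)) \<longlonglongrightarrow> sqrt 0"
      by (rule tendsto_real_sqrt)
    then have "(\<lambda>n. \<bar>B (\<lambda>x. u n x - w x) v\<bar>) \<longlonglongrightarrow> 0" by simp
    then have "(\<lambda>n. B (\<lambda>x. u n x - w x) v) \<longlonglongrightarrow> 0"
      by (simp add: tendsto_rabs_zero_iff)
    then have "(\<lambda>n. g n - (B w v - l v)) \<longlonglongrightarrow> 0" unfolding gdiff .
    then have glim: "g \<longlonglongrightarrow> B w v - l v" by (rule LIM_zero_cancel)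
    have gq: "0 \<le> t * (B w v - l v) + t^2 * B v v / 2" for t
    proof -
      have low: "- 1/(real n + 1) \<le> t * g n + t^2 * B v v / 2" for n
      proof -
        have uvV: "(\<lambda>x. 1 * u n x + t * v x) \<in> V" using lin uV vV by blast
        have "J (\<lambda>x. 1 * u n x + t * v x) = J (u n) + t * g n + t^2 * B v v / 2"
          unfolding J_def g_def Bexp[OF uV vV] llin[OF uV vV]
          by (simp add: power2_eq_square algebra_simps)
        then show ?thesis using mle[OF uvV] uJ[of n] by simp
      qed
      have "(\<lambda>n. t * g n + t^2 * B v v / 2) \<longlonglongrightarrow> t * (B w v - l v) + t^2 * B v v / 2"
        by (intro tendsto_intros glim)
      moreover have "(\<lambda>n. - 1/(real n + 1)) \<longlonglongrightarrow> (0::real)"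
      proof -
        have "(\<lambda>n. - inverse (real (Suc n))) \<longlonglongrightarrow> - 0" by (intro tendsto_minus LIMSEQ_inverse_real_of_nat)
        moreover have "(\<lambda>n. - 1/(real n + 1)) = (\<lambda>n. - inverse (real (Suc n)))"
          by (rule ext) (simp add: field_simps)
        ultimately show ?thesis by simp
      qed
      ultimately show ?thesis using low by (intro LIMSEQ_le) auto
    qed
    have "B w v - l v = 0" using quad_lower_zero[OF Bpos[OF vV] gq] .
    then show "B w v = l v" by simp
  qed
  with wV show ?thesis by blast
qed



lemma id_borel_lebesgue_on: "(\<lambda>x. x) \<in> borel_measurable (lebesgue_on (S::'a::euclidean_space set))"
  by (intro measurable_restrict_space1) (use measurable_completion[of "\<lambda>x. x" lborel borel] in simp)

abbreviation dq :: "real \<Rightarrow> ('a::euclidean_space \<Rightarrow> real) \<Rightarrow> 'a \<times> 'a \<Rightarrow> real" where "dq s u \<equiv> (\<lambda>z. (u (fst z) - u (snd z))\<^sup>2 / norm (fst z - snd z) powr (real DIM('a) + 2 * s))"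
abbreviation dp :: "real \<Rightarrow> ('a::euclidean_space \<Rightarrow> real) \<Rightarrow> ('a \<Rightarrow> real) \<Rightarrow> 'a \<times> 'a \<Rightarrow> real" where "dp s u v \<equiv> (\<lambda>z. (u (fst z) - u (snd z)) * (v (fst z) - v (snd z)) /
                   norm (fst z - snd z) powr (real DIM('a) + 2 * s))"


lemma abs_le_sq: "\<bar>x\<bar> \<le> 1 + x\<^sup>2" for x :: real
proof -
  have "0 \<le> (\<bar>x\<bar> - 1)\<^sup>2" by simp
  moreover have "(\<bar>x\<bar> - 1)\<^sup>2 = x\<^sup>2 - 2*\<bar>x\<bar> + 1" by (simp add: power2_eq_square algebra_simps)
  ultimately show ?thesis by (smt (verit) zero_le_power2)
qed

lemma abs_prod_le: "\<bar>a * b\<bar> \<le> a\<^sup>2 + b\<^sup>2" for a b :: real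
proof -
  have "0 \<le> (\<bar>a\<bar> - \<bar>b\<bar>)\<^sup>2" by simp
  moreover have "(\<bar>a\<bar> - \<bar>b\<bar>)\<^sup>2 = a\<^sup>2 - 2*\<bar>a * b\<bar> + b\<^sup>2" by (simp add: power2_eq_square algebra_simps abs_mult)
  ultimately show ?thesis by (smt (verit) zero_le_power2)
qed

locale frac_dom =
  fixes \<Omega> :: "'a::euclidean_space set" and s :: real
  assumes bnd: "bounded \<Omega>" and opn: "open \<Omega>" and s0: "0 \<le> s"
begin

abbreviation "M \<equiv> lebesgue_on \<Omega>"
abbreviation "P \<equiv> M \<Otimes>\<^sub>M M"
lemma lmeas: "\<Omega> \<in> lmeasurable"
  using bnd opn by (simp add: bounded_set_imp_lmeasurable borel_open)

lemma sets_M: "\<Omega> \<in> sets lebesgue" using opn by (simp add: borel_open)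

lemma spaceM[simp]: "space M = \<Omega>" by simp

lemma finM: "finite_measure M" using lmeas by (rule finite_measure_lebesgue_on)

sublocale fin: finite_measure M by (rule finM)
sublocale pair: pair_sigma_finite M M
  by (simp add: pair_sigma_finite_def fin.sigma_finite_measure_axioms)

lemma pp_nonneg: "0 \<le> real DIM('a) + 2 * s" using s0 by simp

lemma meas_ker: "(\<lambda>z. norm (fst z - snd z) powr (real DIM('a) + 2 * s)) \<in> borel_measurable P"
proof -
  have [measurable]: "(\<lambda>z. fst z) \<in> borel_measurable P"
    by (rule measurable_compose[OF measurable_fst id_borel_lebesgue_on])
  have [measurable]: "(\<lambda>z. snd z) \<in> borel_measurable P"
    by (rule measurable_compose[OF measurable_snd id_borel_lebesgue_on])
  show ?thesis by measurable
qed

lemma meas_fst: "u \<in> borel_measurable M \<Longrightarrow> (\<lambda>z. u (fst z)) \<in> borel_measurable P"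
  by (rule measurable_compose[OF measurable_fst])
lemma meas_snd: "u \<in> borel_measurable M \<Longrightarrow> (\<lambda>z. u (snd z)) \<in> borel_measurable P"
  by (rule measurable_compose[OF measurable_snd])

lemma meas_dq: assumes "u \<in> borel_measurable M" shows "dq s u \<in> borel_measurable P"
proof -
  note [measurable] = meas_fst[OF assms] meas_snd[OF assms] meas_ker
  show ?thesis by measurable
qed

lemma meas_dp: assumes "u \<in> borel_measurable M" "v \<in> borel_measurable M" shows "dp s u v \<in> borel_measurable P"
proof -
  note [measurable] = meas_fst[OF assms(1)] meas_snd[OF assms(1)] meas_fst[OF assms(2)] meas_snd[OF assms(2)] meas_ker
  show ?thesis by measurable
qed

lemma dq_nonneg: "0 \<le> dq s u (z::'a\<times>'a)" by simp

lemma L2_iff: "u \<in> L2 \<Omega> \<longleftrightarrow> u \<in> borel_measurable M \<and> integrable M (\<lambda>x. (u x)\<^sup>2)"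
  by (simp add: L2_def)

lemma L2_integrable: assumes "u \<in> L2 \<Omega>" shows "integrable M u"
proof -
  have m: "u \<in> borel_measurable M" and i: "integrable M (\<lambda>x. (u x)\<^sup>2)" using assms by (auto simp: L2_iff)
  have "integrable M (\<lambda>x. 1 + (u x)\<^sup>2)" using i by simp
  then show ?thesis
  proof (rule Bochner_Integration.integrable_bound)
    show "AE x in M. norm (u x) \<le> norm (1 + (u x)\<^sup>2)"
    proof (rule AE_I2)
      fix x
      have "\<bar>u x\<bar> \<le> 1 + (u x)\<^sup>2" by (rule abs_le_sq)
      then show "norm (u x) \<le> norm (1 + (u x)\<^sup>2)" by simp
    qed
  qed (rule m)
qed

lemma sq_lin: "(a * x + b * y)\<^sup>2 \<le> 2 * a\<^sup>2 * x\<^sup>2 + 2 * b\<^sup>2 * y\<^sup>2" for a b x y :: real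
proof -
  have "0 \<le> (a*x - b*y)\<^sup>2" by simp
  then show ?thesis by (simp add: power2_eq_square algebra_simps)
qed

lemma L2_lin: assumes "u \<in> L2 \<Omega>" "v \<in> L2 \<Omega>" shows "(\<lambda>x. a * u x + b * v x) \<in> L2 \<Omega>"
proof -
  have m: "u \<in> borel_measurable M" "v \<in> borel_measurable M"
    and i: "integrable M (\<lambda>x. (u x)\<^sup>2)" "integrable M (\<lambda>x. (v x)\<^sup>2)" using assms by (auto simp: L2_iff)
  have "integrable M (\<lambda>x. 2 * a\<^sup>2 * (u x)\<^sup>2 + 2 * b\<^sup>2 * (v x)\<^sup>2)" using i by simp
  then have "integrable M (\<lambda>x. (a * u x + b * v x)\<^sup>2)"
  proof (rule Bochner_Integration.integrable_bound)
    show "(\<lambda>x. (a * u x + b * v x)\<^sup>2) \<in> borel_measurable M" using m by measurable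
    show "AE x in M. norm ((a * u x + b * v x)\<^sup>2) \<le> norm (2 * a\<^sup>2 * (u x)\<^sup>2 + 2 * b\<^sup>2 * (v x)\<^sup>2)"
      using sq_lin by (intro AE_I2) (simp add: add_nonneg_nonneg)
  qed
  moreover have "(\<lambda>x. a * u x + b * v x) \<in> borel_measurable M" using m by measurable
  ultimately show ?thesis by (simp add: L2_iff)
qed

lemma Hs_iff: "u \<in> Hs s \<Omega> \<longleftrightarrow> u \<in> L2 \<Omega> \<and> integrable P (dq s u)"
proof -
  have "integrable P (dq s u) \<longleftrightarrow> (\<integral>\<^sup>+ z. ennreal (dq s u z) \<partial>P) < \<infinity>" if "u \<in> L2 \<Omega>"
  proof -
    have "dq s u \<in> borel_measurable P" using that meas_dq by (simp add: L2_iff)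
    then show ?thesis by (simp add: integrable_iff_bounded)
  qed
  then show ?thesis unfolding Hs_def by auto
qed

lemma Hs_L2: "u \<in> Hs s \<Omega> \<Longrightarrow> u \<in> L2 \<Omega>" by (simp add: Hs_iff)
lemma Hs_meas: "u \<in> Hs s \<Omega> \<Longrightarrow> u \<in> borel_measurable M" by (simp add: Hs_iff L2_iff)
lemma Hs_int: "u \<in> Hs s \<Omega> \<Longrightarrow> integrable P (dq s u)" by (simp add: Hs_iff)

lemma dq_lin: "dq s (\<lambda>x. a * u x + b * v x) (z::'a\<times>'a) \<le> 2 * a\<^sup>2 * dq s u z + 2 * b\<^sup>2 * dq s v z"
proof -
  have "dq s (\<lambda>x. a * u x + b * v x) z = (a * (u (fst z) - u (snd z)) + b * (v (fst z) - v (snd z)))\<^sup>2 / norm (fst z - snd z) powr (real DIM('a) + 2 * s)"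
    by (simp add: algebra_simps)
  also have "\<dots> \<le> (2 * a\<^sup>2 * (u (fst z) - u (snd z))\<^sup>2 + 2 * b\<^sup>2 * (v (fst z) - v (snd z))\<^sup>2) / norm (fst z - snd z) powr (real DIM('a) + 2 * s)"
    by (intro divide_right_mono sq_lin) simp
  also have "\<dots> = 2 * a\<^sup>2 * dq s u z + 2 * b\<^sup>2 * dq s v z" by (simp add: add_divide_distrib)
  finally show ?thesis .
qed

lemma Hs_lin: assumes "u \<in> Hs s \<Omega>" "v \<in> Hs s \<Omega>" shows "(\<lambda>x. a * u x + b * v x) \<in> Hs s \<Omega>"
proof -
  have "integrable P (\<lambda>z. 2 * a\<^sup>2 * dq s u z + 2 * b\<^sup>2 * dq s v z)"
    by (intro Bochner_Integration.integrable_add integrable_mult_right Hs_int assms)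
  then have "integrable P (dq s (\<lambda>x. a * u x + b * v x))"
  proof (rule Bochner_Integration.integrable_bound)
    show "dq s (\<lambda>x. a * u x + b * v x) \<in> borel_measurable P"
      using L2_lin[OF Hs_L2[OF assms(1)] Hs_L2[OF assms(2)]] by (intro meas_dq) (simp add: L2_iff)
    show "AE x in P. norm (dq s (\<lambda>x. a * u x + b * v x) x) \<le> norm (2 * a\<^sup>2 * dq s u x + 2 * b\<^sup>2 * dq s v x)"
      using dq_lin by (intro AE_I2) (simp add: add_nonneg_nonneg)
  qed
  with L2_lin[OF Hs_L2[OF assms(1)] Hs_L2[OF assms(2)]] show ?thesis by (simp add: Hs_iff)
qed

lemma dp_bound: "\<bar>dp s u v (z::'a\<times>'a)\<bar> \<le> dq s u z + dq s v z"
proof -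
  have "\<bar>(u (fst z) - u (snd z)) * (v (fst z) - v (snd z))\<bar> \<le> (u (fst z) - u (snd z))\<^sup>2 + (v (fst z) - v (snd z))\<^sup>2"
  proof -
    show ?thesis by (rule abs_prod_le)
  qed
  then have "\<bar>(u (fst z) - u (snd z)) * (v (fst z) - v (snd z))\<bar> / norm (fst z - snd z) powr (real DIM('a) + 2 * s)
      \<le> ((u (fst z) - u (snd z))\<^sup>2 + (v (fst z) - v (snd z))\<^sup>2) / norm (fst z - snd z) powr (real DIM('a) + 2 * s)"
    by (intro divide_right_mono) auto
  then show ?thesis by (simp add: add_divide_distrib)
qed

lemma dp_int: assumes "u \<in> Hs s \<Omega>" "v \<in> Hs s \<Omega>" shows "integrable P (dp s u v)"
proof -
  have "integrable P (\<lambda>z. dq s u z + dq s v z)"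
    by (intro Bochner_Integration.integrable_add Hs_int assms)
  then show ?thesis
  proof (rule Bochner_Integration.integrable_bound)
    show "dp s u v \<in> borel_measurable P" using assms Hs_meas meas_dp by simp
    show "AE x in P. norm (dp s u v x) \<le> norm (dq s u x + dq s v x)"
      using dp_bound by (intro AE_I2) (simp add: add_nonneg_nonneg)
  qed
qed

lemma Es_alt: "Es s \<Omega> u v = 1/2 * integral\<^sup>L P (dp s u v)"
  by (simp add: Es_def)

lemma Es_sym: "Es s \<Omega> u v = Es s \<Omega> v u"
  unfolding Es_alt by (simp add: mult.commute)

lemma Es_lin: assumes "u \<in> Hs s \<Omega>" "v \<in> Hs s \<Omega>" "w \<in> Hs s \<Omega>"
  shows "Es s \<Omega> (\<lambda>x. a * u x + b * v x) w = a * Es s \<Omega> u w + b * Es s \<Omega> v w"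
proof -
  have eq: "dp s (\<lambda>x. a * u x + b * v x) w = (\<lambda>z. a * dp s u w z + b * dp s v w z)"
    by (rule ext) (simp add: divide_inverse algebra_simps)
  have i1: "integrable P (\<lambda>z. a * dp s u w z)" by (intro integrable_mult_right dp_int assms)
  have i2: "integrable P (\<lambda>z. b * dp s v w z)" by (intro integrable_mult_right dp_int assms)
  have "integral\<^sup>L P (\<lambda>z. a * dp s u w z + b * dp s v w z) = integral\<^sup>L P (\<lambda>z. a * dp s u w z) + integral\<^sup>L P (\<lambda>z. b * dp s v w z)"
    by (rule Bochner_Integration.integral_add[OF i1 i2])
  also have "\<dots> = a * integral\<^sup>L P (dp s u w) + b * integral\<^sup>L P (dp s v w)"
    by (simp only: integral_mult_right_zero)
  finally show ?thesis unfolding Es_alt eq by (simp add: algebra_simps)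
qed

lemma Es_self: "Es s \<Omega> u u = 1/2 * integral\<^sup>L P (dq s u)"
  unfolding Es_alt by (simp add: power2_eq_square)

lemma Es_self_nonneg: "0 \<le> Es s \<Omega> u u"
  unfolding Es_self by simp

end


lemma fatou_real:
  fixes g :: "nat \<Rightarrow> 'b \<Rightarrow> real"
  assumes meas: "\<And>k. g k \<in> borel_measurable M"
    and conv: "AE x in M. (\<lambda>k. g k x) \<longlonglongrightarrow> G x"
    and bnd: "\<And>k. K \<le> k \<Longrightarrow> (\<integral>\<^sup>+ x. ennreal (g k x) \<partial>M) \<le> c"
  shows "(\<integral>\<^sup>+ x. ennreal (G x) \<partial>M) \<le> c"
proof -
  have "(\<integral>\<^sup>+ x. ennreal (G x) \<partial>M) = (\<integral>\<^sup>+ x. liminf (\<lambda>k. ennreal (g k x)) \<partial>M)"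
  proof (rule nn_integral_cong_AE)
    show "AE x in M. ennreal (G x) = liminf (\<lambda>k. ennreal (g k x))"
      using conv
    proof (rule AE_mp, intro AE_I2 impI)
      fix x assume "(\<lambda>k. g k x) \<longlonglongrightarrow> G x"
      then have "(\<lambda>k. ennreal (g k x)) \<longlonglongrightarrow> ennreal (G x)" by (rule tendsto_ennrealI)
      then show "ennreal (G x) = liminf (\<lambda>k. ennreal (g k x))"
        by (simp add: lim_imp_Liminf)
    qed
  qed
  also have "\<dots> \<le> liminf (\<lambda>k. \<integral>\<^sup>+ x. ennreal (g k x) \<partial>M)"
    by (rule nn_integral_liminf) (use meas in measurable)
  also have "\<dots> \<le> limsup (\<lambda>k. \<integral>\<^sup>+ x. ennreal (g k x) \<partial>M)"
    by (rule Liminf_le_Limsup) simp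
  also have "\<dots> \<le> c"
    by (rule Limsup_bounded) (use bnd in \<open>auto simp: eventually_sequentially\<close>)
  finally show ?thesis .
qed

lemma abs_le_geom: "\<bar>d\<bar> \<le> 2^k * d\<^sup>2 + (1/2)^k" for d :: real
proof (cases "\<bar>d\<bar> \<le> (1/2)^k")
  case True
  have "0 \<le> (2::real)^k * d\<^sup>2" by simp
  with True show ?thesis by linarith
next
  case False
  then have lt: "(1/2)^k < \<bar>d\<bar>" by simp
  have "(2::real)^k * (1/2)^k = 1" by (simp add: power_one_over)
  moreover have "(2::real)^k * (1/2)^k < 2^k * \<bar>d\<bar>" using lt by (intro mult_strict_left_mono) auto
  ultimately have one: "1 < 2^k * \<bar>d\<bar>" by simp
  have dpos: "0 < \<bar>d\<bar>" using lt by (smt (verit) zero_less_power zero_less_divide_1_iff)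
  have "1 * \<bar>d\<bar> < (2^k * \<bar>d\<bar>) * \<bar>d\<bar>" by (rule mult_strict_right_mono[OF one dpos])
  also have "\<dots> = 2^k * d\<^sup>2" by (simp add: power2_eq_square)
  finally have "\<bar>d\<bar> < 2^k * d\<^sup>2" by simp
  moreover have "0 \<le> ((1::real)/2)^k" by simp
  ultimately show ?thesis by linarith
qed

lemma L2_subseq_ae:
  fixes u :: "nat \<Rightarrow> 'b \<Rightarrow> real"
  assumes meas: "\<And>n. u n \<in> borel_measurable M"
    and sq: "\<And>n m. integrable M (\<lambda>x. (u n x - u m x)\<^sup>2)"
    and cauchy: "\<And>e. e > 0 \<Longrightarrow> \<exists>N. \<forall>n\<ge>N. \<forall>m\<ge>N. (\<integral>x. (u n x - u m x)\<^sup>2 \<partial>M) < e"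
  shows "\<exists>r. strict_mono r \<and> (AE x in M. convergent (\<lambda>k. u (r k) x))"
proof -
  have "\<forall>k. \<exists>N. \<forall>n\<ge>N. \<forall>m\<ge>N. (\<integral>x. (u n x - u m x)\<^sup>2 \<partial>M) < (1/8)^k"
    using cauchy by simp
  then obtain N where N: "\<And>k n m. N k \<le> n \<Longrightarrow> N k \<le> m \<Longrightarrow> (\<integral>x. (u n x - u m x)\<^sup>2 \<partial>M) < (1/8)^k"
    by metis
  define r where "r k = k + (\<Sum>j\<le>k. N j)" for k
  have rmono: "strict_mono r"
    unfolding strict_mono_Suc_iff r_def by simp
  have rN: "N k \<le> r k" for k
    unfolding r_def by (simp add: member_le_sum trans_le_add2)
  have rN': "N k \<le> r (Suc k)" for k
    using rN[of k] rmono by (meson less_imp_le_nat order_trans strict_mono_Suc_iff)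
  define d where "d k x = u (r (Suc k)) x - u (r k) x" for k x
  have dint: "(\<integral>x. (d k x)\<^sup>2 \<partial>M) < (1/8)^k" for k
    unfolding d_def by (rule N[OF rN' rN])
  have dmeas[measurable]: "d k \<in> borel_measurable M" for k unfolding d_def using meas by measurable
  have dsq: "integrable M (\<lambda>x. (d k x)\<^sup>2)" for k unfolding d_def by (rule sq)
  define F where "F x = (\<Sum>k. ennreal (2^k * (d k x)\<^sup>2))" for x
  have "(\<integral>\<^sup>+ x. F x \<partial>M) = (\<Sum>k. \<integral>\<^sup>+ x. ennreal (2^k * (d k x)\<^sup>2) \<partial>M)"
    unfolding F_def by (rule nn_integral_suminf) measurable
  also have "\<dots> \<le> (\<Sum>k. ennreal ((1/4)^k))"
  proof (intro suminf_le summableI)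
    fix k
    have "(\<integral>\<^sup>+ x. ennreal (2^k * (d k x)\<^sup>2) \<partial>M) = ennreal (\<integral>x. 2^k * (d k x)\<^sup>2 \<partial>M)"
      by (rule nn_integral_eq_integral) (use dsq in auto)
    also have "\<dots> \<le> ennreal ((1/4)^k)"
    proof (rule ennreal_leI)
      have "(\<integral>x. 2^k * (d k x)\<^sup>2 \<partial>M) = 2^k * (\<integral>x. (d k x)\<^sup>2 \<partial>M)" by simp
      also have "\<dots> \<le> 2^k * (1/8)^k" using dint[of k] by (intro mult_left_mono) auto
      also have "\<dots> = (1/4)^k" by (simp add: power_one_over power_mult_distrib[symmetric] flip: power_divide)
      finally show "(\<integral>x. 2^k * (d k x)\<^sup>2 \<partial>M) \<le> (1/4)^k" .
    qed
    finally show "(\<integral>\<^sup>+ x. ennreal (2^k * (d k x)\<^sup>2) \<partial>M) \<le> ennreal ((1/4)^k)" .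
  qed
  also have "\<dots> = ennreal (\<Sum>k. (1/4)^k)"
    by (rule suminf_ennreal2) (auto intro: summable_geometric)
  finally have "(\<integral>\<^sup>+ x. F x \<partial>M) \<noteq> \<infinity>" by (auto simp: top_unique)
  then have ae: "AE x in M. F x \<noteq> \<infinity>"
    by (intro nn_integral_PInf_AE) (auto simp: F_def)
  have "AE x in M. convergent (\<lambda>k. u (r k) x)"
    using ae
  proof (rule AE_mp, intro AE_I2 impI)
    fix x assume "F x \<noteq> \<infinity>"
    then have s1: "summable (\<lambda>k. 2^k * (d k x)\<^sup>2)"
      unfolding F_def by (intro summable_suminf_not_top) auto
    have "summable (\<lambda>k. 2^k * (d k x)\<^sup>2 + (1/2)^k)"
      by (intro summable_add s1 summable_geometric) simp
    then have "summable (\<lambda>k. \<bar>d k x\<bar>)"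
      by (rule summable_comparison_test[rotated]) (auto intro!: exI[of _ 0] abs_le_geom)
    then have "summable (\<lambda>k. d k x)" by (rule summable_rabs_cancel)
    then have "convergent (\<lambda>k. \<Sum>j<k. d j x)" by (simp add: summable_iff_convergent)
    then have "convergent (\<lambda>k. (\<Sum>j<k. d j x) + u (r 0) x)" by (rule convergent_add_const_right_iff[THEN iffD2])
    moreover have "(\<Sum>j<k. d j x) + u (r 0) x = u (r k) x" for k
      unfolding d_def by (subst sum_lessThan_telescope) simp
    ultimately show "convergent (\<lambda>k. u (r k) x)" by simp
  qed
  with rmono show ?thesis by blast
qed



context frac_dom begin

definition "RR = (SOME R. R > 0 \<and> (\<forall>x\<in>\<Omega>. \<forall>y\<in>\<Omega>. norm (x - y) \<le> R))"

lemma RR: "RR > 0" "\<And>x y. x \<in> \<Omega> \<Longrightarrow> y \<in> \<Omega> \<Longrightarrow> norm (x - y) \<le> RR"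
proof -
  obtain a where a: "\<And>x. x \<in> \<Omega> \<Longrightarrow> norm x \<le> a" using bnd by (auto simp: bounded_iff)
  have "\<exists>R. R > 0 \<and> (\<forall>x\<in>\<Omega>. \<forall>y\<in>\<Omega>. norm (x - y) \<le> R)"
  proof (intro exI[of _ "2 * \<bar>a\<bar> + 1"] conjI ballI)
    fix x y assume "x \<in> \<Omega>" "y \<in> \<Omega>"
    then have "norm (x - y) \<le> norm x + norm y" "norm x \<le> a" "norm y \<le> a"
      using a norm_triangle_ineq4 by auto
    then show "norm (x - y) \<le> 2 * \<bar>a\<bar> + 1" by linarith
  qed simp
  from someI_ex[OF this] show "RR > 0" "\<And>x y. x \<in> \<Omega> \<Longrightarrow> y \<in> \<Omega> \<Longrightarrow> norm (x - y) \<le> RR"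
    unfolding RR_def by auto
qed

lemma ptwise_poinc:
  assumes "x \<in> \<Omega>" "y \<in> \<Omega>"
  shows "(u x - u y)\<^sup>2 \<le> RR powr (real DIM('a) + 2 * s) * ((u x - u y)\<^sup>2 / norm (x - y) powr (real DIM('a) + 2 * s))"
proof (cases "x = y")
  case True then show ?thesis by simp
next
  case False
  define k where "k = norm (x - y) powr (real DIM('a) + 2 * s)"
  have kpos: "k > 0" unfolding k_def using False by simp
  have kle: "k \<le> RR powr (real DIM('a) + 2 * s)" unfolding k_def
    using RR(2)[OF assms] pp_nonneg by (intro powr_mono2) auto
  have "(u x - u y)\<^sup>2 = k * ((u x - u y)\<^sup>2 / k)" using kpos by simp
  also have "\<dots> \<le> RR powr (real DIM('a) + 2 * s) * ((u x - u y)\<^sup>2 / k)"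
    using kle kpos by (intro mult_right_mono) auto
  finally show ?thesis unfolding k_def .
qed

lemma nn_dq: assumes "u \<in> Hs s \<Omega>" shows "(\<integral>\<^sup>+ z. ennreal (dq s u z) \<partial>P) = ennreal (2 * Es s \<Omega> u u)"
  unfolding Es_self using Hs_int[OF assms] by (simp add: nn_integral_eq_integral)

lemma poincare:
  assumes "u \<in> Hs s \<Omega>" "integral\<^sup>L M u = 0"
  shows "2 * measure M \<Omega> * (\<integral>x. (u x)\<^sup>2 \<partial>M) \<le> RR powr (real DIM('a) + 2 * s) * (2 * Es s \<Omega> u u)"
proof -
  have um[measurable]: "u \<in> borel_measurable M" using Hs_meas[OF assms(1)] .
  have ui: "integrable M u" using L2_integrable[OF Hs_L2[OF assms(1)]] .
  have u2: "integrable M (\<lambda>x. (u x)\<^sup>2)" using Hs_L2[OF assms(1)] by (simp add: L2_iff)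
  define n2 where "n2 = (\<integral>x. (u x)\<^sup>2 \<partial>M)"
  define \<mu> where "\<mu> = measure M \<Omega>"
  have inner: "(\<integral>\<^sup>+y. ennreal ((u x - u y)\<^sup>2) \<partial>M) = ennreal (\<mu> * (u x)\<^sup>2 + n2)" if "x \<in> \<Omega>" for x
  proof -
    have eq: "(\<lambda>y. (u x - u y)\<^sup>2) = (\<lambda>y. (u x)\<^sup>2 - 2 * u x * u y + (u y)\<^sup>2)"
      by (rule ext) (simp add: power2_eq_square algebra_simps)
    have i1: "integrable M (\<lambda>y. (u x)\<^sup>2 - 2 * u x * u y)" using ui by simp
    have "integrable M (\<lambda>y. (u x)\<^sup>2 - 2 * u x * u y + (u y)\<^sup>2)"
      by (rule Bochner_Integration.integrable_add[OF i1 u2])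
    then have int: "integrable M (\<lambda>y. (u x - u y)\<^sup>2)" unfolding eq .
    have "(\<integral>y. (u x - u y)\<^sup>2 \<partial>M) = (\<integral>y. (u x)\<^sup>2 - 2 * u x * u y \<partial>M) + n2"
      unfolding eq n2_def by (rule Bochner_Integration.integral_add[OF i1 u2])
    also have "(\<integral>y. (u x)\<^sup>2 - 2 * u x * u y \<partial>M) = \<mu> * (u x)\<^sup>2"
      using ui assms(2) by (simp add: \<mu>_def)
    finally have "(\<integral>y. (u x - u y)\<^sup>2 \<partial>M) = \<mu> * (u x)\<^sup>2 + n2" .
    with int show ?thesis by (simp add: nn_integral_eq_integral)
  qed
  have "(\<integral>\<^sup>+z. ennreal ((u (fst z) - u (snd z))\<^sup>2) \<partial>P) = (\<integral>\<^sup>+x. \<integral>\<^sup>+y. ennreal ((u x - u y)\<^sup>2) \<partial>M \<partial>M)"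
    using fin.nn_integral_fst[of "\<lambda>z. ennreal ((u (fst z) - u (snd z))\<^sup>2)" M]
    using meas_fst[OF um] meas_snd[OF um] by simp
  also have "\<dots> = (\<integral>\<^sup>+x. ennreal (\<mu> * (u x)\<^sup>2 + n2) \<partial>M)"
    by (rule nn_integral_cong) (simp add: inner)
  also have "\<dots> = ennreal (\<integral>x. \<mu> * (u x)\<^sup>2 + n2 \<partial>M)"
  proof (rule nn_integral_eq_integral)
    show "integrable M (\<lambda>x. \<mu> * (u x)\<^sup>2 + n2)" using u2 by simp
    have "0 \<le> \<mu>" unfolding \<mu>_def by simp
    moreover have "0 \<le> n2" unfolding n2_def by simp
    ultimately show "AE x in M. 0 \<le> \<mu> * (u x)\<^sup>2 + n2" by (intro AE_I2) simp
  qed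
  also have "(\<integral>x. \<mu> * (u x)\<^sup>2 + n2 \<partial>M) = 2 * \<mu> * n2"
    using u2 by (simp add: n2_def \<mu>_def)
  finally have lhs: "(\<integral>\<^sup>+z. ennreal ((u (fst z) - u (snd z))\<^sup>2) \<partial>P) = ennreal (2 * \<mu> * n2)" .
  have "(\<integral>\<^sup>+z. ennreal ((u (fst z) - u (snd z))\<^sup>2) \<partial>P)
      \<le> (\<integral>\<^sup>+z. ennreal (RR powr (real DIM('a) + 2 * s)) * ennreal (dq s u z) \<partial>P)"
  proof (rule nn_integral_mono)
    fix z assume "z \<in> space P"
    then have "fst z \<in> \<Omega>" "snd z \<in> \<Omega>" by (auto simp: space_pair_measure)
    from ptwise_poinc[OF this, of u]
    show "ennreal ((u (fst z) - u (snd z))\<^sup>2) \<le> ennreal (RR powr (real DIM('a) + 2 * s)) * ennreal (dq s u z)"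
      by (simp add: ennreal_mult[symmetric] ennreal_leI)
  qed
  also have "\<dots> = ennreal (RR powr (real DIM('a) + 2 * s)) * (\<integral>\<^sup>+z. ennreal (dq s u z) \<partial>P)"
    by (rule nn_integral_cmult) (rule measurable_compose[OF meas_dq[OF um]], simp)
  also have "\<dots> = ennreal (RR powr (real DIM('a) + 2 * s) * (2 * Es s \<Omega> u u))"
    unfolding nn_dq[OF assms(1)] using Es_self_nonneg by (simp add: ennreal_mult)
  finally have "ennreal (2 * \<mu> * n2) \<le> ennreal (RR powr (real DIM('a) + 2 * s) * (2 * Es s \<Omega> u u))"
    unfolding lhs .
  then show ?thesis unfolding \<mu>_def n2_def
    using Es_self_nonneg by (subst (asm) ennreal_le_iff) auto
qed

lemma prod_int: assumes "f \<in> L2 \<Omega>" "v \<in> L2 \<Omega>" shows "integrable M (\<lambda>x. f x * v x)"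
proof -
  have "integrable M (\<lambda>x. (f x)\<^sup>2 + (v x)\<^sup>2)" using assms by (simp add: L2_iff)
  then show ?thesis
  proof (rule Bochner_Integration.integrable_bound)
    show "(\<lambda>x. f x * v x) \<in> borel_measurable M" using assms by (intro borel_measurable_times) (auto simp: L2_iff)
    show "AE x in M. norm (f x * v x) \<le> norm ((f x)\<^sup>2 + (v x)\<^sup>2)"
      using abs_prod_le by (intro AE_I2) (simp add: add_nonneg_nonneg)
  qed
qed

lemma int_cs: assumes "f \<in> L2 \<Omega>" "v \<in> L2 \<Omega>"
  shows "(\<integral>x. f x * v x \<partial>M)\<^sup>2 \<le> (\<integral>x. (v x)\<^sup>2 \<partial>M) * (\<integral>x. (f x)\<^sup>2 \<partial>M)"
proof (rule quad_nonneg_cs)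
  have f2: "integrable M (\<lambda>x. (f x)\<^sup>2)" and v2: "integrable M (\<lambda>x. (v x)\<^sup>2)" using assms by (auto simp: L2_iff)
  have fv: "integrable M (\<lambda>x. f x * v x)" by (rule prod_int[OF assms])
  show "0 \<le> (\<integral>x. (f x)\<^sup>2 \<partial>M)" by simp
  fix t
  have eq: "(\<lambda>x. (v x + t * f x)\<^sup>2) = (\<lambda>x. (v x)\<^sup>2 + (2 * t) * (f x * v x) + t\<^sup>2 * (f x)\<^sup>2)"
    by (rule ext) (simp add: power2_eq_square algebra_simps)
  have i1: "integrable M (\<lambda>x. (v x)\<^sup>2 + (2 * t) * (f x * v x))" using v2 fv by simp
  have i2: "integrable M (\<lambda>x. t\<^sup>2 * (f x)\<^sup>2)" using f2 by simp
  have "0 \<le> (\<integral>x. (v x + t * f x)\<^sup>2 \<partial>M)" by simp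
  also have "\<dots> = (\<integral>x. (v x)\<^sup>2 + (2 * t) * (f x * v x) \<partial>M) + (\<integral>x. t\<^sup>2 * (f x)\<^sup>2 \<partial>M)"
    unfolding eq by (rule Bochner_Integration.integral_add[OF i1 i2])
  also have "\<dots> = (\<integral>x. (v x)\<^sup>2 \<partial>M) + (2 * t) * (\<integral>x. f x * v x \<partial>M) + t\<^sup>2 * (\<integral>x. (f x)\<^sup>2 \<partial>M)"
    by (simp only: Bochner_Integration.integral_add[OF v2 integrable_mult_right[OF fv]] integral_mult_right_zero)
  also have "\<dots> = (\<integral>x. (v x)\<^sup>2 \<partial>M) + 2 * (\<integral>x. f x * v x \<partial>M) * t + (\<integral>x. (f x)\<^sup>2 \<partial>M) * t\<^sup>2"
    by (simp add: algebra_simps)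
  finally show "0 \<le> (\<integral>x. (v x)\<^sup>2 \<partial>M) + 2 * (\<integral>x. f x * v x \<partial>M) * t + (\<integral>x. (f x)\<^sup>2 \<partial>M) * t\<^sup>2" .
qed

lemma AE_fst: assumes "AE x in M. Q x" shows "AE z in P. Q (fst z)"
proof -
  from assms obtain N where N: "{x \<in> space M. \<not> Q x} \<subseteq> N" "emeasure M N = 0" "N \<in> sets M" by (rule AE_E)
  have "N \<times> space M \<in> null_sets P" using N by (intro fin.times_in_null_sets1) auto
  moreover have "{z \<in> space P. \<not> Q (fst z)} \<subseteq> N \<times> space M" using N(1) by (auto simp: space_pair_measure)
  ultimately show ?thesis by (rule AE_I')
qed

lemma AE_snd: assumes "AE x in M. Q x" shows "AE z in P. Q (snd z)"
proof -
  from assms obtain N where N: "{x \<in> space M. \<not> Q x} \<subseteq> N" "emeasure M N = 0" "N \<in> sets M" by (rule AE_E)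
  have "space M \<times> N \<in> null_sets P" using N by (intro fin.times_in_null_sets2) auto
  moreover have "{z \<in> space P. \<not> Q (snd z)} \<subseteq> space M \<times> N" using N(1) by (auto simp: space_pair_measure)
  ultimately show ?thesis by (rule AE_I')
qed

end


lemma tendsto_div_c: "(f \<longlongrightarrow> a) F \<Longrightarrow> ((\<lambda>x. f x / c) \<longlongrightarrow> a / (c::real)) F"
  using tendsto_mult_right[of f a F "inverse c"] by (simp add: divide_inverse)

context frac_dom begin

lemma Xs_iff: "u \<in> Xs s \<Omega> \<longleftrightarrow> u \<in> Hs s \<Omega> \<and> integral\<^sup>L M u = 0"
  by (simp add: Xs_def)

lemma diff_eq: "(\<lambda>x. u x - v x) = (\<lambda>x. 1 * u x + (-1) * v x)" for u v :: "'a \<Rightarrow> real"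
  by simp

lemma int_lin: assumes "u \<in> L2 \<Omega>" "v \<in> L2 \<Omega>"
  shows "integral\<^sup>L M (\<lambda>x. a * u x + b * v x) = a * integral\<^sup>L M u + b * integral\<^sup>L M v"
  using L2_integrable[OF assms(1)] L2_integrable[OF assms(2)] by simp

lemma Xs_lin: assumes "u \<in> Xs s \<Omega>" "v \<in> Xs s \<Omega>" shows "(\<lambda>x. a * u x + b * v x) \<in> Xs s \<Omega>"
  using assms Hs_lin int_lin[OF Hs_L2 Hs_L2] by (auto simp: Xs_iff)

lemma Xs_diff: assumes "u \<in> Xs s \<Omega>" "v \<in> Xs s \<Omega>" shows "(\<lambda>x. u x - v x) \<in> Xs s \<Omega>"
  unfolding diff_eq by (rule Xs_lin[OF assms])

lemma Hs_diff: assumes "u \<in> Hs s \<Omega>" "v \<in> Hs s \<Omega>" shows "(\<lambda>x. u x - v x) \<in> Hs s \<Omega>"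
  unfolding diff_eq by (rule Hs_lin[OF assms])

lemma const_Hs: "(\<lambda>x. c) \<in> Hs s \<Omega>"
  unfolding Hs_iff L2_iff by simp

lemma zero_Xs: "(\<lambda>x. 0) \<in> Xs s \<Omega>"
  using const_Hs[of 0] by (simp add: Xs_iff)

lemma mu_pos: assumes "\<Omega> \<noteq> {}" shows "measure M \<Omega> > 0"
proof -
  obtain x where x: "x \<in> \<Omega>" using assms by auto
  obtain e where e: "e > 0" "ball x e \<subseteq> \<Omega>" using opn x by (meson open_contains_ball)
  have "0 < measure lborel (ball x e)" using e(1) by (rule content_ball_pos)
  also have "measure lborel (ball x e) = measure lebesgue (ball x e)" by simp
  also have "measure lebesgue (ball x e) \<le> measure lebesgue \<Omega>"
    using e lmeas by (intro measure_mono_fmeasurable) auto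
  also have "measure lebesgue \<Omega> = measure M \<Omega>"
    using sets_M by (simp add: measure_restrict_space)
  finally show ?thesis .
qed

lemma Xs_complete:
  assumes mu: "measure M \<Omega> > 0" and uX: "\<And>n. u n \<in> Xs s \<Omega>"
    and cau: "\<And>e. e > 0 \<Longrightarrow> \<exists>N. \<forall>n\<ge>N. \<forall>m\<ge>N. Es s \<Omega> (\<lambda>x. u n x - u m x) (\<lambda>x. u n x - u m x) < e"
  shows "\<exists>w\<in>Xs s \<Omega>. (\<lambda>n. Es s \<Omega> (\<lambda>x. u n x - w x) (\<lambda>x. u n x - w x)) \<longlonglongrightarrow> 0"
proof -
  define \<mu> where "\<mu> = measure M \<Omega>"
  define K where "K = RR powr (real DIM('a) + 2 * s)"
  have Kpos: "K > 0" unfolding K_def using RR(1) by simp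
  have mupos: "\<mu> > 0" using mu by (simp add: \<mu>_def)
  have uH: "u n \<in> Hs s \<Omega>" for n using uX by (simp add: Xs_iff)
  have um[measurable]: "u n \<in> borel_measurable M" for n using Hs_meas[OF uH] .
  have dX: "(\<lambda>x. u n x - u m x) \<in> Xs s \<Omega>" for n m by (rule Xs_diff[OF uX uX])
  have sq: "integrable M (\<lambda>x. (u n x - u m x)\<^sup>2)" for n m
    using dX[of n m] by (simp add: Xs_iff Hs_iff L2_iff)
  have dbound: "(\<integral>x. (u n x - u m x)\<^sup>2 \<partial>M) \<le> K * Es s \<Omega> (\<lambda>x. u n x - u m x) (\<lambda>x. u n x - u m x) / \<mu>" for n m
  proof -
    have "2 * \<mu> * (\<integral>x. (u n x - u m x)\<^sup>2 \<partial>M) \<le> K * (2 * Es s \<Omega> (\<lambda>x. u n x - u m x) (\<lambda>x. u n x - u m x))"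
      unfolding \<mu>_def K_def using dX[of n m] by (intro poincare) (auto simp: Xs_iff)
    then show ?thesis using mupos by (simp add: field_simps)
  qed
  have "\<exists>r. strict_mono r \<and> (AE x in M. convergent (\<lambda>k. u (r k) x))"
  proof (rule L2_subseq_ae[OF um sq])
    fix e :: real assume "e > 0"
    then have "e * \<mu> / K > 0" using mupos Kpos by simp
    from cau[OF this] obtain N where N: "\<And>n m. N \<le> n \<Longrightarrow> N \<le> m \<Longrightarrow> Es s \<Omega> (\<lambda>x. u n x - u m x) (\<lambda>x. u n x - u m x) < e * \<mu> / K"
      by blast
    show "\<exists>N. \<forall>n\<ge>N. \<forall>m\<ge>N. (\<integral>x. (u n x - u m x)\<^sup>2 \<partial>M) < e"
    proof (intro exI allI impI)
      fix n m assume "N \<le> n" "N \<le> m"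
      have "K * Es s \<Omega> (\<lambda>x. u n x - u m x) (\<lambda>x. u n x - u m x) / \<mu> < K * (e * \<mu> / K) / \<mu>"
        using N[OF \<open>N \<le> n\<close> \<open>N \<le> m\<close>] Kpos mupos by (intro divide_strict_right_mono mult_strict_left_mono) auto
      also have "\<dots> = e" using Kpos mupos by simp
      finally show "(\<integral>x. (u n x - u m x)\<^sup>2 \<partial>M) < e" using dbound[of n m] by linarith
    qed
  qed
  then obtain r where r: "strict_mono r" and rconv: "AE x in M. convergent (\<lambda>k. u (r k) x)" by blast
  define w where "w x = lim (\<lambda>k. u (r k) x)" for x
  have wm[measurable]: "w \<in> borel_measurable M" unfolding w_def by measurable
  have wlim: "AE x in M. (\<lambda>k. u (r k) x) \<longlonglongrightarrow> w x"
    using rconv by eventually_elim (simp add: w_def convergent_LIMSEQ_iff)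
  have rge: "k \<le> r k" for k using r by (rule seq_suble)
  have key: "\<exists>N. \<forall>n\<ge>N. (\<integral>\<^sup>+z. ennreal (dq s (\<lambda>x. u n x - w x) z) \<partial>P) \<le> ennreal (2 * e)" if "e > 0" for e
  proof -
    from cau[OF that] obtain N where N: "\<And>n m. N \<le> n \<Longrightarrow> N \<le> m \<Longrightarrow> Es s \<Omega> (\<lambda>x. u n x - u m x) (\<lambda>x. u n x - u m x) < e"
      by blast
    show ?thesis
    proof (intro exI allI impI)
      fix n assume "N \<le> n"
      show "(\<integral>\<^sup>+z. ennreal (dq s (\<lambda>x. u n x - w x) z) \<partial>P) \<le> ennreal (2 * e)"
      proof (rule fatou_real[where g = "\<lambda>k. dq s (\<lambda>x. u n x - u (r k) x)" and K = N])
        show "dq s (\<lambda>x. u n x - u (r k) x) \<in> borel_measurable P" for k by (rule meas_dq) measurable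
        show "AE z in P. (\<lambda>k. dq s (\<lambda>x. u n x - u (r k) x) z) \<longlonglongrightarrow> dq s (\<lambda>x. u n x - w x) z"
          using AE_fst[OF wlim] AE_snd[OF wlim]
        proof eventually_elim
          case (elim z)
          show ?case by (intro tendsto_div_c tendsto_intros elim)
        qed
        fix k assume "N \<le> k"
        then have "N \<le> r k" using rge order_trans by blast
        have "(\<integral>\<^sup>+z. ennreal (dq s (\<lambda>x. u n x - u (r k) x) z) \<partial>P) = ennreal (2 * Es s \<Omega> (\<lambda>x. u n x - u (r k) x) (\<lambda>x. u n x - u (r k) x))"
          by (rule nn_dq[OF Hs_diff[OF uH uH]])
        also have "\<dots> \<le> ennreal (2 * e)"
          using N[OF \<open>N \<le> n\<close> \<open>N \<le> r k\<close>] by (intro ennreal_leI) simp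
        finally show "(\<integral>\<^sup>+z. ennreal (dq s (\<lambda>x. u n x - u (r k) x) z) \<partial>P) \<le> ennreal (2 * e)" .
      qed
    qed
  qed
  have keyL2: "\<exists>N. \<forall>n\<ge>N. (\<integral>\<^sup>+x. ennreal ((u n x - w x)\<^sup>2) \<partial>M) \<le> ennreal (K / \<mu>)"
  proof -
    from cau[of 1] obtain N where N: "\<And>n m. N \<le> n \<Longrightarrow> N \<le> m \<Longrightarrow> Es s \<Omega> (\<lambda>x. u n x - u m x) (\<lambda>x. u n x - u m x) < 1"
      by auto
    show ?thesis
    proof (intro exI allI impI)
      fix n assume "N \<le> n"
      show "(\<integral>\<^sup>+x. ennreal ((u n x - w x)\<^sup>2) \<partial>M) \<le> ennreal (K / \<mu>)"
      proof (rule fatou_real[where g = "\<lambda>k x. (u n x - u (r k) x)\<^sup>2" and K = N])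
        show "(\<lambda>x. (u n x - u (r k) x)\<^sup>2) \<in> borel_measurable M" for k by measurable
        show "AE x in M. (\<lambda>k. (u n x - u (r k) x)\<^sup>2) \<longlonglongrightarrow> (u n x - w x)\<^sup>2"
          using wlim by eventually_elim (intro tendsto_intros)
        fix k assume "N \<le> k"
        then have "N \<le> r k" using rge order_trans by blast
        have "(\<integral>\<^sup>+x. ennreal ((u n x - u (r k) x)\<^sup>2) \<partial>M) = ennreal (\<integral>x. (u n x - u (r k) x)\<^sup>2 \<partial>M)"
          using sq by (simp add: nn_integral_eq_integral)
        also have "\<dots> \<le> ennreal (K / \<mu>)"
        proof (rule ennreal_leI)
          have "K * Es s \<Omega> (\<lambda>x. u n x - u (r k) x) (\<lambda>x. u n x - u (r k) x) \<le> K * 1"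
            using N[OF \<open>N \<le> n\<close> \<open>N \<le> r k\<close>] Kpos by (intro mult_left_mono) auto
          then have "K * Es s \<Omega> (\<lambda>x. u n x - u (r k) x) (\<lambda>x. u n x - u (r k) x) / \<mu> \<le> K / \<mu>"
            using mupos by (simp add: divide_right_mono)
          then show "(\<integral>x. (u n x - u (r k) x)\<^sup>2 \<partial>M) \<le> K / \<mu>" using dbound[of n "r k"] by linarith
        qed
        finally show "(\<integral>\<^sup>+x. ennreal ((u n x - u (r k) x)\<^sup>2) \<partial>M) \<le> ennreal (K / \<mu>)" .
      qed
    qed
  qed
  obtain N1 where N1: "\<And>n. N1 \<le> n \<Longrightarrow> (\<integral>\<^sup>+x. ennreal ((u n x - w x)\<^sup>2) \<partial>M) \<le> ennreal (K / \<mu>)"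
    using keyL2 by blast
  obtain N2 where N2: "\<And>n. N2 \<le> n \<Longrightarrow> (\<integral>\<^sup>+z. ennreal (dq s (\<lambda>x. u n x - w x) z) \<partial>P) \<le> ennreal (2 * 1)"
    using key[of 1] by auto
  define n0 where "n0 = max N1 N2"
  define d where "d x = u n0 x - w x" for x
  have dm[measurable]: "d \<in> borel_measurable M" unfolding d_def by measurable
  have dL2: "d \<in> L2 \<Omega>"
  proof -
    have "(\<integral>\<^sup>+x. ennreal (norm ((d x)\<^sup>2)) \<partial>M) \<le> ennreal (K / \<mu>)"
      using N1[of n0] unfolding n0_def d_def by simp
    then have "integrable M (\<lambda>x. (d x)\<^sup>2)"
      by (subst integrable_iff_bounded) (auto simp: top_unique[symmetric] intro: le_less_trans)
    then show ?thesis by (simp add: L2_iff)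
  qed
  have dH: "d \<in> Hs s \<Omega>"
  proof -
    have "(\<integral>\<^sup>+z. ennreal (norm (dq s d z)) \<partial>P) \<le> ennreal (2 * 1)"
      using N2[of n0] unfolding n0_def d_def by simp
    then have "integrable P (dq s d)"
      by (subst integrable_iff_bounded) (auto intro!: meas_dq intro: le_less_trans)
    with dL2 show ?thesis by (simp add: Hs_iff)
  qed
  have wH: "w \<in> Hs s \<Omega>"
  proof -
    have "(\<lambda>x. 1 * u n0 x + (-1) * d x) \<in> Hs s \<Omega>" by (rule Hs_lin[OF uH dH])
    moreover have "(\<lambda>x. 1 * u n0 x + (-1) * d x) = w" by (rule ext) (simp add: d_def)
    ultimately show ?thesis by simp
  qed
  define c where "c = integral\<^sup>L M w / \<mu>"
  define w' where "w' x = 1 * w x + (-c) * 1" for x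
  have w'H: "w' \<in> Hs s \<Omega>" unfolding w'_def by (rule Hs_lin[OF wH const_Hs])
  have "integral\<^sup>L M w' = integral\<^sup>L M w - c * \<mu>"
    unfolding w'_def using L2_integrable[OF Hs_L2[OF wH]] by (simp add: \<mu>_def)
  also have "\<dots> = 0" unfolding c_def using mupos by simp
  finally have w'X: "w' \<in> Xs s \<Omega>" using w'H by (simp add: Xs_iff)
  have same: "Es s \<Omega> (\<lambda>x. u n x - w' x) (\<lambda>x. u n x - w' x) = Es s \<Omega> (\<lambda>x. u n x - w x) (\<lambda>x. u n x - w x)" for n
  proof -
    have "dq s (\<lambda>x. u n x - w' x) = dq s (\<lambda>x. u n x - w x)"
      by (rule ext) (simp add: w'_def algebra_simps)
    then show ?thesis unfolding Es_self by simp
  qed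
  have "(\<lambda>n. Es s \<Omega> (\<lambda>x. u n x - w x) (\<lambda>x. u n x - w x)) \<longlonglongrightarrow> 0"
  proof (rule LIMSEQ_I)
    fix e :: real assume "e > 0"
    then obtain N where N: "\<And>n. N \<le> n \<Longrightarrow> (\<integral>\<^sup>+z. ennreal (dq s (\<lambda>x. u n x - w x) z) \<partial>P) \<le> ennreal (2 * (e/4))"
      using key[of "e/4"] by auto
    show "\<exists>N. \<forall>n\<ge>N. norm (Es s \<Omega> (\<lambda>x. u n x - w x) (\<lambda>x. u n x - w x) - 0) < e"
    proof (intro exI allI impI)
      fix n assume "N \<le> n"
      have "ennreal (2 * Es s \<Omega> (\<lambda>x. u n x - w x) (\<lambda>x. u n x - w x)) \<le> ennreal (2 * (e/4))"
        using N[OF \<open>N \<le> n\<close>] nn_dq[OF Hs_diff[OF uH wH]] by simp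
      then have "2 * Es s \<Omega> (\<lambda>x. u n x - w x) (\<lambda>x. u n x - w x) \<le> 2 * (e/4)"
        using \<open>e > 0\<close> by (subst (asm) ennreal_le_iff) auto
      then show "norm (Es s \<Omega> (\<lambda>x. u n x - w x) (\<lambda>x. u n x - w x) - 0) < e"
        using Es_self_nonneg[of "\<lambda>x. u n x - w x"] \<open>e > 0\<close> by simp
    qed
  qed
  then show ?thesis using w'X same by (intro bexI[of _ w']) simp_all
qed

end


context frac_dom begin

lemma l_lin: assumes "f \<in> L2 \<Omega>" "u \<in> L2 \<Omega>" "v \<in> L2 \<Omega>"
  shows "(\<integral>x. f x * (a * u x + b * v x) \<partial>M) = a * (\<integral>x. f x * u x \<partial>M) + b * (\<integral>x. f x * v x \<partial>M)"
proof -
  have "(\<lambda>x. f x * (a * u x + b * v x)) = (\<lambda>x. a * (f x * u x) + b * (f x * v x))"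
    by (rule ext) (simp add: algebra_simps)
  then show ?thesis using prod_int[OF assms(1,2)] prod_int[OF assms(1,3)] by simp
qed

theorem main:
  assumes fL: "f \<in> L2_0 \<Omega>"
  shows "\<exists>u\<in>Xs s \<Omega>. weak_solution s \<Omega> f u \<and>
           (\<forall>w\<in>Xs s \<Omega>. weak_solution s \<Omega> f w \<longrightarrow> (AE x in lebesgue_on \<Omega>. w x = u x))"
proof (cases "\<Omega> = {}")
  case True
  have "weak_solution s \<Omega> f (\<lambda>x. 0)"
    unfolding weak_solution_def
  proof
    fix v assume "v \<in> Hs s \<Omega>"
    have "Es s \<Omega> (\<lambda>x. 0) v = 0" unfolding Es_alt by simp
    moreover have "(\<integral>x. f x * v x \<partial>M) = (\<integral>x. 0 \<partial>M)"
      by (rule Bochner_Integration.integral_cong) (auto simp: True)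
    ultimately show "Es s \<Omega> (\<lambda>x. 0) v = (\<integral>x. f x * v x \<partial>M)" by simp
  qed
  moreover have "AE x in M. w x = 0" for w :: "'a \<Rightarrow> real" by (rule AE_I2) (simp add: True)
  ultimately show ?thesis using zero_Xs by blast
next
  case False
  define \<mu> where "\<mu> = measure M \<Omega>"
  have mupos: "\<mu> > 0" unfolding \<mu>_def by (rule mu_pos[OF False])
  define K where "K = RR powr (real DIM('a) + 2 * s)"
  have fL2: "f \<in> L2 \<Omega>" and f0: "integral\<^sup>L M f = 0" using fL by (auto simp: L2_0_def)
  define F2 where "F2 = (\<integral>x. (f x)\<^sup>2 \<partial>M)"
  have F2nn: "F2 \<ge> 0" unfolding F2_def by simp
  have XH: "u \<in> Xs s \<Omega> \<Longrightarrow> u \<in> Hs s \<Omega>" for u by (simp add: Xs_iff)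
  have XL: "u \<in> Xs s \<Omega> \<Longrightarrow> u \<in> L2 \<Omega>" for u by (simp add: Xs_iff Hs_L2)
  have "\<exists>u\<in>Xs s \<Omega>. \<forall>v\<in>Xs s \<Omega>. Es s \<Omega> u v = (\<lambda>v. \<integral>x. f x * v x \<partial>M) v"
  proof (rule abstract_riesz[where C = "F2 * K / \<mu>"])
    show "\<And>u v a b. u \<in> Xs s \<Omega> \<Longrightarrow> v \<in> Xs s \<Omega> \<Longrightarrow> (\<lambda>x. a * u x + b * v x) \<in> Xs s \<Omega>"
      by (rule Xs_lin)
    show "\<And>u v w a b. u \<in> Xs s \<Omega> \<Longrightarrow> v \<in> Xs s \<Omega> \<Longrightarrow> w \<in> Xs s \<Omega> \<Longrightarrow>
      Es s \<Omega> (\<lambda>x. a * u x + b * v x) w = a * Es s \<Omega> u w + b * Es s \<Omega> v w"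
      by (rule Es_lin) (auto simp: XH)
    show "\<And>u v. u \<in> Xs s \<Omega> \<Longrightarrow> v \<in> Xs s \<Omega> \<Longrightarrow> Es s \<Omega> u v = Es s \<Omega> v u" by (rule Es_sym)
    show "\<And>u. u \<in> Xs s \<Omega> \<Longrightarrow> 0 \<le> Es s \<Omega> u u" by (rule Es_self_nonneg)
    show "\<And>u v a b. u \<in> Xs s \<Omega> \<Longrightarrow> v \<in> Xs s \<Omega> \<Longrightarrow>
      (\<integral>x. f x * (a * u x + b * v x) \<partial>M) = a * (\<integral>x. f x * u x \<partial>M) + b * (\<integral>x. f x * v x \<partial>M)"
      by (rule l_lin[OF fL2]) (auto simp: XL)
    show "(\<integral>x. f x * u x \<partial>M)\<^sup>2 \<le> F2 * K / \<mu> * Es s \<Omega> u u" if "u \<in> Xs s \<Omega>" for u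
    proof -
      have "(\<integral>x. f x * u x \<partial>M)\<^sup>2 \<le> (\<integral>x. (u x)\<^sup>2 \<partial>M) * F2"
        unfolding F2_def by (rule int_cs[OF fL2 XL[OF that]])
      also have "(\<integral>x. (u x)\<^sup>2 \<partial>M) \<le> K * Es s \<Omega> u u / \<mu>"
      proof -
        have "2 * \<mu> * (\<integral>x. (u x)\<^sup>2 \<partial>M) \<le> K * (2 * Es s \<Omega> u u)"
          unfolding \<mu>_def K_def using that by (intro poincare) (auto simp: Xs_iff)
        then show ?thesis using mupos by (simp add: field_simps)
      qed
      then have "(\<integral>x. (u x)\<^sup>2 \<partial>M) * F2 \<le> K * Es s \<Omega> u u / \<mu> * F2"
        using F2nn by (rule mult_right_mono)
      also have "\<dots> = F2 * K / \<mu> * Es s \<Omega> u u" by simp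
      finally show ?thesis .
    qed
    show "\<And>u. (\<And>n. u n \<in> Xs s \<Omega>) \<Longrightarrow>
         (\<And>e. 0 < e \<Longrightarrow> \<exists>N. \<forall>n\<ge>N. \<forall>m\<ge>N. Es s \<Omega> (\<lambda>x. u n x - u m x) (\<lambda>x. u n x - u m x) < e) \<Longrightarrow>
         \<exists>w\<in>Xs s \<Omega>. (\<lambda>n. Es s \<Omega> (\<lambda>x. u n x - w x) (\<lambda>x. u n x - w x)) \<longlonglongrightarrow> 0"
      by (rule Xs_complete) (use mupos in \<open>auto simp: \<mu>_def\<close>)
    show "Xs s \<Omega> \<noteq> {}" using zero_Xs by blast
  qed
  then obtain u where uX: "u \<in> Xs s \<Omega>" and sol: "\<And>v. v \<in> Xs s \<Omega> \<Longrightarrow> Es s \<Omega> u v = (\<integral>x. f x * v x \<partial>M)"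
    by auto
  have uH: "u \<in> Hs s \<Omega>" using uX by (simp add: Xs_iff)
  have ws: "weak_solution s \<Omega> f u"
    unfolding weak_solution_def
  proof
    fix v assume vH: "v \<in> Hs s \<Omega>"
    define c where "c = integral\<^sup>L M v / \<mu>"
    define v' where "v' x = 1 * v x + (-c) * 1" for x
    have v'H: "v' \<in> Hs s \<Omega>" unfolding v'_def by (rule Hs_lin[OF vH const_Hs])
    have "integral\<^sup>L M v' = integral\<^sup>L M v - c * \<mu>"
      unfolding v'_def using L2_integrable[OF Hs_L2[OF vH]] by (simp add: \<mu>_def)
    also have "\<dots> = 0" unfolding c_def using mupos by simp
    finally have v'X: "v' \<in> Xs s \<Omega>" using v'H by (simp add: Xs_iff)
    have "dp s u v' = dp s u v" by (rule ext) (simp add: v'_def algebra_simps)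
    then have "Es s \<Omega> u v = Es s \<Omega> u v'" unfolding Es_alt by simp
    also have "\<dots> = (\<integral>x. f x * v' x \<partial>M)" by (rule sol[OF v'X])
    also have "\<dots> = 1 * (\<integral>x. f x * v x \<partial>M) + (-c) * (\<integral>x. f x * 1 \<partial>M)"
      unfolding v'_def by (rule l_lin[OF fL2 Hs_L2[OF vH] Hs_L2[OF const_Hs]])
    also have "\<dots> = (\<integral>x. f x * v x \<partial>M)" using f0 by simp
    finally show "Es s \<Omega> u v = (\<integral>x. f x * v x \<partial>M)" .
  qed
  have uniq: "AE x in M. w x = u x" if wX: "w \<in> Xs s \<Omega>" and ww: "weak_solution s \<Omega> f w" for w
  proof -
    have wH: "w \<in> Hs s \<Omega>" using wX by (simp add: Xs_iff)
    define d where "d x = 1 * w x + (-1) * u x" for x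
    have dX: "d \<in> Xs s \<Omega>" unfolding d_def by (rule Xs_lin[OF wX uX])
    have dH: "d \<in> Hs s \<Omega>" using dX by (simp add: Xs_iff)
    have "Es s \<Omega> d d = 1 * Es s \<Omega> w d + (-1) * Es s \<Omega> u d"
      unfolding d_def by (rule Es_lin[OF wH uH dH[unfolded d_def]])
    also have "\<dots> = 0" using ww ws dH unfolding weak_solution_def by simp
    finally have E0: "Es s \<Omega> d d = 0" .
    have "2 * \<mu> * (\<integral>x. (d x)\<^sup>2 \<partial>M) \<le> K * (2 * Es s \<Omega> d d)"
      unfolding \<mu>_def K_def using dX by (intro poincare) (auto simp: Xs_iff)
    then have "(\<integral>x. (d x)\<^sup>2 \<partial>M) \<le> 0" using E0 mupos by (simp add: mult_le_0_iff)
    moreover have "0 \<le> (\<integral>x. (d x)\<^sup>2 \<partial>M)" by simp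
    ultimately have "(\<integral>x. (d x)\<^sup>2 \<partial>M) = 0" by linarith
    moreover have "integrable M (\<lambda>x. (d x)\<^sup>2)" using dH by (simp add: Hs_iff L2_iff)
    ultimately have "AE x in M. (d x)\<^sup>2 = 0" by (subst (asm) integral_nonneg_eq_0_iff_AE) auto
    then show ?thesis by eventually_elim (simp add: d_def)
  qed
  show ?thesis using uX ws uniq by blast
qed

end

theorem proposition3p5:
  fixes \<Omega> :: "'a::euclidean_space set" and s :: real and f :: "'a \<Rightarrow> real"
  assumes "bounded \<Omega>" and "open \<Omega>" and "lipschitz_set \<Omega>"
    and "0 \<le> s" and "s < 1"
    and "f \<in> L2_0 \<Omega>"
  shows "\<exists>u\<in>Xs s \<Omega>. weak_solution s \<Omega> f u \<and>
           (\<forall>w\<in>Xs s \<Omega>. weak_solution s \<Omega> f w \<longrightarrow>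
              (AE x in lebesgue_on \<Omega>. w x = u x))"
proof -
  interpret frac_dom \<Omega> s using assms by unfold_locales auto
  show ?thesis by (rule main[OF assms(6)])
qed

end
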